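(* Let $k$ be a field and $Q,q\in k^\times$ with $f_d(Q,q)=\prod_{i=1-d}^{d-1}(Q^{-2}+q^{2i})\neq0$. For each sign $\pm$, the square formed by the quotient maps $\otimes^d\to S^d$, $\otimes^d\to\otimes^d_\pm$, $\otimes^d_\pm\to S^d_\pm$ and the induced map $p_\pm:S^d\to S^d_\pm$ is a pushout; likewise the square with $\wedge^d$ and $\wedge^d_\pm$ in place of $S^d$ and $S^d_\pm$ is a pushout.
   Context: $\mathcal H^B_{Q,q}(d)$ is generated by $T_0,\dots,T_{d-1}$ with relations $(T_0+Q)(T_0-Q^{-1})=0$; $(T_i+q)(T_i-q^{-1})=0$ ($i>0$); $T_iT_{i+1}T_i=T_{i+1}T_iT_{i+1}$ ($i>0$); $T_0T_1T_0T_1=T_1T_0T_1T_0$; $T_iT_j=T_jT_i$ ($|i-j|>1$); $K_i=T_{i-1}\cdots T_1T_0T_1\cdots T_{i-1}$. $V_n$ has basis $v_i$, $i\in\mathbb I_n$ ($\mathbb I_{2s}=\{-\tfrac{2s-1}{2},\dots,\tfrac{2s-1}{2}\}$ half-integers, $\mathbb I_{2s+1}=\{-s,\dots,s\}$); the right action on $V_n^{\otimes d}$: $T_i$ ($i>0$) on factors $i,i+1$ by $R_q$: $v_i\otimes v_j\mapsto q^{-1}v_i\otimes v_j$ ($i=j$), $v_j\otimes v_i$ ($i<j$), $v_j\otimes v_i+(q^{-1}-q)v_i\otimes v_j$ ($i>j$); $T_0$ on the first factor by $K_Q$: $v_i\mapsto Q^{-1}v_i$ ($i=0$), $v_{-i}$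 ($i>0$), $v_{-i}+(Q^{-1}-Q)v_i$ ($i<0$). All functors are evaluated at $V_n$ and are functorial for $\mathrm{Hom}_{\mathcal H^B_{Q,q}(d)}(V_n^{\otimes d},V_m^{\otimes d})$. $\otimes^d(V_n)=V_n^{\otimes d}$; $S^dV_n=V_n^{\otimes d}/\mathrm{span}\{(T_i-q^{-1})w: i>0\}$; $\wedge^dV_n=V_n^{\otimes d}/\mathrm{span}\{(T_i+q)w:i>0\}$; $S^d_+V_n=V_n^{\otimes d}/\mathrm{span}\{(T_0-Q^{-1})w,(T_i-q^{-1})w\}$; $S^d_-V_n=V_n^{\otimes d}/\mathrm{span}\{(T_0+Q)w,(T_i-q^{-1})w\}$; $\wedge^d_+V_n=V_n^{\otimes d}/\mathrm{span}\{(T_0-Q^{-1})w,(T_i+q)w\}$; $\wedge^d_-V_n=V_n^{\otimes d}/\mathrm{span}\{(T_0+Q)w,(T_i+q)w\}$ ($w\in V_n^{\otimes d}$, $i>0$). Eigenvalues of $K_i$ are of the form $Q^{-1}q^{2j}$ ("positive") or $-Qq^{2j}$ ("negative"), disjoint when $f_d(Q,q)\ne0$; $\otimes^d_+$ is the largest quotient of $\otimes^d$ on which each $K_i$ has only positive eigenvalues and $\otimes^d_-$ the direct summand on which each $K_i$ has only negative eigenvalues, viewed as a quotient of $\otimes^d$ via the projection. *)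

theory Defs
  imports Main "HOL.Vector_Spaces"
begin

text \<open>Basis indices of V_n: the half-integer/integer index i in I_n is stored as the
  integer 2i.  So the index set is {m. |m| <= n-1, m = n-1 mod 2}; order, sign and
  negation are preserved by this encoding.\<close>

definition idx :: "nat \<Rightarrow> int set" where
  "idx n = {m. \<bar>m\<bar> \<le> int n - 1 \<and> (m + int n + 1) mod 2 = 0}"

definition tuples :: "nat \<Rightarrow> nat \<Rightarrow> int list set" where
  "tuples n d = {x. length x = d \<and> set x \<subseteq> idx n}"

text \<open>V_n^{tensor d} as coefficient functions supported on the basis tuples.\<close>
definition tens :: "nat \<Rightarrow> nat \<Rightarrow> (int list \<Rightarrow> 'a::field) set" where
  "tens n d = {w. \<forall>x. w x \<noteq> 0 \<longrightarrow> x \<in> tuples n d}"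

definition ebas :: "int list \<Rightarrow> int list \<Rightarrow> 'a::field" where
  "ebas x = (\<lambda>y. if y = x then 1 else 0)"

text \<open>Image of the basis tensor x under the generator T_i (right action):
  T_0 acts by K_Q on the first factor, T_i (i>0) by R_q on factors i, i+1.\<close>
definition Tb :: "'a::field \<Rightarrow> 'a \<Rightarrow> nat \<Rightarrow> int list \<Rightarrow> int list \<Rightarrow> 'a" where
  "Tb Q q i x =
    (if i = 0 then
       (let a = x ! 0; s = x[0 := - a] in
        if a = 0 then (\<lambda>y. inverse Q * ebas x y)
        else if a > 0 then ebas s
        else (\<lambda>y. ebas s y + (inverse Q - Q) * ebas x y))
     else
       (let a = x ! (i - 1); b = x ! i; s = x[i - 1 := b, i := a] in
        if a = b then (\<lambda>y. inverse q * ebas x y)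
        else if a < b then ebas s
        else (\<lambda>y. ebas s y + (inverse q - q) * ebas x y)))"

definition Tact :: "'a::field \<Rightarrow> 'a \<Rightarrow> nat \<Rightarrow> nat \<Rightarrow> nat \<Rightarrow> (int list \<Rightarrow> 'a) \<Rightarrow> (int list \<Rightarrow> 'a)" where
  "Tact Q q n d i w = (\<lambda>y. \<Sum>x\<in>tuples n d. w x * Tb Q q i x y)"

text \<open>Right action of K_i = T_{i-1} ... T_1 T_0 T_1 ... T_{i-1}:  w K_i.\<close>
definition Kact :: "'a::field \<Rightarrow> 'a \<Rightarrow> nat \<Rightarrow> nat \<Rightarrow> nat \<Rightarrow> (int list \<Rightarrow> 'a) \<Rightarrow> (int list \<Rightarrow> 'a)" where
  "Kact Q q n d i w = fold (Tact Q q n d) (rev [1..<i] @ 0 # [1..<i]) w"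

definition f_poly :: "nat \<Rightarrow> 'a::field \<Rightarrow> 'a \<Rightarrow> 'a" where
  "f_poly d Q q = (\<Prod>i\<in>{1 - int d..int d - 1}. inverse (Q^2) + q powi (2 * i))"

definition closed_sub :: "(int list \<Rightarrow> 'a::field) set \<Rightarrow> bool" where
  "closed_sub W \<longleftrightarrow> (\<lambda>y. 0) \<in> W \<and> (\<forall>u\<in>W. \<forall>v\<in>W. (\<lambda>y. u y + v y) \<in> W)
      \<and> (\<forall>c. \<forall>u\<in>W. (\<lambda>y. c * u y) \<in> W)"

definition lspan :: "(int list \<Rightarrow> 'a::field) set \<Rightarrow> (int list \<Rightarrow> 'a) set" where
  "lspan S = \<Inter>{W. closed_sub W \<and> S \<subseteq> W}"

definition sym_rels where
  "sym_rels Q q n d = {(\<lambda>y. Tact Q q n d i w y - inverse q * w y) | i w. 0 < i \<and> i < d \<and> w \<in> tens n d}"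

definition wedge_rels where
  "wedge_rels Q q n d = {(\<lambda>y. Tact Q q n d i w y + q * w y) | i w. 0 < i \<and> i < d \<and> w \<in> tens n d}"

text \<open>Relation for T_0: sign True means T_0 - Q^{-1}, False means T_0 + Q.\<close>
definition T0_rels where
  "T0_rels sg Q q n d = {(\<lambda>y. Tact Q q n d 0 w y - (if sg then inverse Q else - Q) * w y) | w.
        0 < d \<and> w \<in> tens n d}"

text \<open>Kernels of the quotient maps from V_n^{tensor d}.\<close>
definition sym_ker where "sym_ker Q q n d = lspan (sym_rels Q q n d)"
definition wedge_ker where "wedge_ker Q q n d = lspan (wedge_rels Q q n d)"
definition symS_ker where "symS_ker sg Q q n d = lspan (T0_rels sg Q q n d \<union> sym_rels Q q n d)"
definition wedgeS_ker where "wedgeS_ker sg Q q n d = lspan (T0_rels sg Q q n d \<union> wedge_rels Q q n d)"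

definition sgn_eig :: "bool \<Rightarrow> nat \<Rightarrow> 'a::field \<Rightarrow> 'a \<Rightarrow> 'a \<Rightarrow> bool" where
  "sgn_eig sg d Q q c \<longleftrightarrow>
     (\<exists>j::int. \<bar>j\<bar> < int d \<and> c = (if sg then inverse Q else - Q) * q powi (2 * j))"

text \<open>Kernel of the largest quotient of V_n^{tensor d} on which every K_i (1 <= i <= d)
  has only eigenvalues of the sign sg: intersection of all K-stable subspaces W such
  that every eigenvalue of every K_i on V/W has sign sg.\<close>
definition tens_ker where
  "tens_ker sg Q q n d = \<Inter>{W. W \<subseteq> tens n d \<and> closed_sub W
      \<and> (\<forall>i\<in>{1..d}. \<forall>w\<in>W. Kact Q q n d i w \<in> W)
      \<and> (\<forall>i\<in>{1..d}. \<forall>c. (\<exists>v\<in>tens n d. v \<notin> W \<and> (\<lambda>y. Kact Q q n d i v y - c * v y) \<in> W)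
             \<longrightarrow> sgn_eig sg d Q q c)}"

definition lin_on :: "(int list \<Rightarrow> 'a::field) set \<Rightarrow> ('a \<Rightarrow> 'z::ab_group_add \<Rightarrow> 'z)
     \<Rightarrow> ((int list \<Rightarrow> 'a) \<Rightarrow> 'z) \<Rightarrow> bool" where
  "lin_on V sZ f \<longleftrightarrow> (\<forall>u\<in>V. \<forall>v\<in>V. f (\<lambda>y. u y + v y) = f u + f v)
      \<and> (\<forall>c. \<forall>u\<in>V. f (\<lambda>y. c * u y) = sZ c (f u))"

definition vanish :: "(int list \<Rightarrow> 'a) set \<Rightarrow> ((int list \<Rightarrow> 'a) \<Rightarrow> 'z::ab_group_add) \<Rightarrow> bool" where
  "vanish N f \<longleftrightarrow> (\<forall>u\<in>N. f u = 0)"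

text \<open>The square of quotient maps V \<rightarrow> V/A, V \<rightarrow> V/B, V/A \<rightarrow> V/C, V/B \<rightarrow> V/C
  (which exist iff A, B \<subseteq> C) is a pushout of k-vector spaces, tested against
  all k-vector spaces Z of type 'z.  A linear map V/N \<rightarrow> Z is represented by the
  composite V \<rightarrow> V/N \<rightarrow> Z, i.e. a linear map on V vanishing on N; two such maps
  are equal iff they agree on V.\<close>
definition quot_pushout :: "'z::ab_group_add itself \<Rightarrow> (int list \<Rightarrow> 'a::field) set
     \<Rightarrow> (int list \<Rightarrow> 'a) set \<Rightarrow> (int list \<Rightarrow> 'a) set \<Rightarrow> (int list \<Rightarrow> 'a) set \<Rightarrow> bool" where
  "quot_pushout (_ :: 'z itself) V A B C \<longleftrightarrow> A \<subseteq> C \<and> B \<subseteq> C \<and>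
     (\<forall>(sZ :: 'a \<Rightarrow> 'z \<Rightarrow> 'z). vector_space sZ \<longrightarrow>
       (\<forall>u v. lin_on V sZ u \<and> vanish A u \<and> lin_on V sZ v \<and> vanish B v \<and> (\<forall>x\<in>V. u x = v x)
         \<longrightarrow> (\<exists>h. lin_on V sZ h \<and> vanish C h \<and> (\<forall>x\<in>V. h x = u x) \<and> (\<forall>x\<in>V. h x = v x)
              \<and> (\<forall>h'. lin_on V sZ h' \<and> vanish C h' \<and> (\<forall>x\<in>V. h' x = u x) \<and> (\<forall>x\<in>V. h' x = v x)
                    \<longrightarrow> (\<forall>x\<in>V. h' x = h x)))))"

end

theory Submission
  imports Defs
begin

lemma finite_idx: "finite (idx n)"
proof -
  have "idx n \<subseteq> {- int n..int n}" unfolding idx_def by auto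
  then show ?thesis using finite_subset by blast
qed

lemma finite_tuples: "finite (tuples n d)"
proof -
  have "tuples n d = {x. set x \<subseteq> idx n \<and> length x = d}" unfolding tuples_def by auto
  then show ?thesis using finite_lists_length_eq[OF finite_idx] by simp
qed

lemma idx_neg: "a \<in> idx n \<Longrightarrow> - a \<in> idx n"
  unfolding idx_def by auto

lemma closed_tens: "closed_sub (tens n d)"
  unfolding closed_sub_def tens_def by (auto, metis add.right_neutral)

lemma ebas_tens: "s \<in> tuples n d \<Longrightarrow> ebas s \<in> tens n d"
  unfolding tens_def ebas_def by auto

lemma Tb_tens:
  assumes x: "x \<in> tuples n d" and i: "i < d"
  shows "Tb Q q i x \<in> tens n d"
proof -
  have lx: "length x = d" and sx: "set x \<subseteq> idx n" using x unfolding tuples_def by auto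
  show ?thesis
  proof (cases "i = 0")
    case True
    have "x ! 0 \<in> idx n" using sx lx i by (simp add: subset_iff)
    then have m: "- (x ! 0) \<in> idx n" by (rule idx_neg)
    have s: "x[0 := - (x ! 0)] \<in> tuples n d"
      unfolding tuples_def using lx sx m set_update_subset_insert[of x 0 "- (x ! 0)"] by auto
    show ?thesis using True x s unfolding Tb_def Let_def tens_def ebas_def by auto
  next
    case False
    have "x ! (i - 1) \<in> idx n" "x ! i \<in> idx n" using sx lx i by (auto simp: subset_iff)
    then have s: "x[i - 1 := x ! i, i := x ! (i - 1)] \<in> tuples n d"
      unfolding tuples_def using lx sx set_update_subset_insert[of x "i - 1" "x ! i"]
        set_update_subset_insert[of "x[i - 1 := x ! i]" i "x ! (i - 1)"] by auto
    show ?thesis using False x s unfolding Tb_def Let_def tens_def ebas_def by auto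
  qed
qed

lemma Tact_tens: "i < d \<Longrightarrow> Tact Q q n d i w \<in> tens n d"
proof -
  assume i: "i < d"
  show ?thesis unfolding Tact_def tens_def mem_Collect_eq
  proof (intro allI impI)
    fix y assume h: "(\<Sum>x\<in>tuples n d. w x * Tb Q q i x y) \<noteq> 0"
    show "y \<in> tuples n d"
    proof (rule ccontr)
      assume "y \<notin> tuples n d"
      then have "\<forall>x\<in>tuples n d. Tb Q q i x y = 0" using Tb_tens[OF _ i] unfolding tens_def by blast
      then show False using h by simp
    qed
  qed
qed

lemma Tact_add: "Tact Q q n d i (\<lambda>y. u y + v y) = (\<lambda>y. Tact Q q n d i u y + Tact Q q n d i v y)"
  unfolding Tact_def by (simp add: algebra_simps sum.distrib)

lemma Tact_diff: "Tact Q q n d i (\<lambda>y. u y - v y) = (\<lambda>y. Tact Q q n d i u y - Tact Q q n d i v y)"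
  unfolding Tact_def by (simp add: algebra_simps sum_subtractf)

lemma Tact_scale: "Tact Q q n d i (\<lambda>y. c * u y) = (\<lambda>y. c * Tact Q q n d i u y)"
  unfolding Tact_def by (simp add: sum_distrib_left mult.assoc)

lemma Tact_ebas: "s \<in> tuples n d \<Longrightarrow> Tact Q q n d i (ebas s) = Tb Q q i s"
proof -
  assume s: "s \<in> tuples n d"
  show ?thesis unfolding Tact_def ebas_def
  proof
    fix y
    have "(\<Sum>x\<in>tuples n d. (if x = s then 1 else 0) * Tb Q q i x y)
        = (\<Sum>x\<in>tuples n d. if x = s then Tb Q q i x y else 0)"
      by (rule sum.cong) auto
    also have "\<dots> = Tb Q q i s y" using s finite_tuples by simp
    finally show "(\<Sum>x\<in>tuples n d. (if x = s then 1 else 0) * Tb Q q i x y) = Tb Q q i s y" .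
  qed
qed


lemma T0_sq_basis:
  assumes z: "z \<in> tuples n d" and d: "0 < d" and Q: "Q \<noteq> 0"
  shows "Tact Q q n d 0 (Tb Q q 0 z) = (\<lambda>y. (inverse Q - Q) * Tb Q q 0 z y + ebas z y)"
proof -
  have lz: "length z = d" using z unfolding tuples_def by auto
  define a where "a = z ! 0"
  define s where "s = z[0 := - a]"
  have az: "z ! 0 \<in> idx n" using z lz d unfolding tuples_def by (auto simp: subset_iff)
  have s: "s \<in> tuples n d"
    unfolding s_def a_def tuples_def using lz z idx_neg[OF az] set_update_subset_insert[of z 0 "- (z ! 0)"]
    unfolding tuples_def by auto
  have s0: "s ! 0 = - a" unfolding s_def using lz d by simp
  have ss: "s[0 := - (s ! 0)] = z" unfolding s0 unfolding s_def a_def by simp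
  have Tz: "Tb Q q 0 z = (if a = 0 then (\<lambda>y. inverse Q * ebas z y)
        else if a > 0 then ebas s else (\<lambda>y. ebas s y + (inverse Q - Q) * ebas z y))"
    unfolding Tb_def Let_def a_def s_def by simp
  have Ts: "Tb Q q 0 s = (if - a = 0 then (\<lambda>y. inverse Q * ebas s y)
        else if - a > 0 then ebas z else (\<lambda>y. ebas z y + (inverse Q - Q) * ebas s y))"
    using ss unfolding Tb_def Let_def s0 by simp
  show ?thesis
  proof (cases "a = 0")
    case True
    then have "Tact Q q n d 0 (Tb Q q 0 z) = (\<lambda>y. inverse Q * Tb Q q 0 z y)"
      using Tz Tact_scale[of Q q n d 0 "inverse Q" "ebas z"] Tact_ebas[OF z, of Q q 0] by simp
    then show ?thesis using Tz True Q by (auto simp: field_simps)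
  next
    case False
    show ?thesis
    proof (cases "a > 0")
      case True
      then show ?thesis using Tz Ts Tact_ebas[OF s, of Q q 0] by (auto simp: algebra_simps)
    next
      case False2: False
      have "Tact Q q n d 0 (Tb Q q 0 z) = (\<lambda>y. Tb Q q 0 s y + (inverse Q - Q) * Tb Q q 0 z y)"
        using Tz False False2 Tact_add[of Q q n d 0 "ebas s"] Tact_scale[of Q q n d 0 "inverse Q - Q" "ebas z"]
          Tact_ebas[OF s, of Q q 0] Tact_ebas[OF z, of Q q 0] by simp
      then show ?thesis using Ts False False2 by (auto simp: algebra_simps)
    qed
  qed
qed

lemma T0_sq:
  assumes w: "w \<in> tens n d" and d: "0 < d" and Q: "Q \<noteq> 0"
  shows "Tact Q q n d 0 (Tact Q q n d 0 w) = (\<lambda>y. (inverse Q - Q) * Tact Q q n d 0 w y + w y)"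
proof
  fix y
  have "Tact Q q n d 0 (Tact Q q n d 0 w) y
      = (\<Sum>x\<in>tuples n d. \<Sum>z\<in>tuples n d. w z * (Tb Q q 0 z x * Tb Q q 0 x y))"
    unfolding Tact_def by (simp add: sum_distrib_right mult.assoc)
  also have "\<dots> = (\<Sum>z\<in>tuples n d. w z * (\<Sum>x\<in>tuples n d. Tb Q q 0 z x * Tb Q q 0 x y))"
    by (subst sum.swap) (simp add: sum_distrib_left)
  also have "\<dots> = (\<Sum>z\<in>tuples n d. w z * Tact Q q n d 0 (Tb Q q 0 z) y)"
    unfolding Tact_def by simp
  also have "\<dots> = (\<Sum>z\<in>tuples n d. w z * ((inverse Q - Q) * Tb Q q 0 z y + ebas z y))"
    using T0_sq_basis[OF _ d Q] by simp
  also have "\<dots> = (inverse Q - Q) * Tact Q q n d 0 w y + (\<Sum>z\<in>tuples n d. w z * ebas z y)"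
    unfolding Tact_def by (simp add: distrib_left sum.distrib sum_distrib_left mult.left_commute)
  also have "(\<Sum>z\<in>tuples n d. w z * ebas z y) = w y"
  proof -
    have "(\<Sum>z\<in>tuples n d. w z * ebas z y) = (\<Sum>z\<in>tuples n d. if z = y then w y else 0)"
      unfolding ebas_def by (rule sum.cong) auto
    also have "\<dots> = w y" using finite_tuples w unfolding tens_def by auto
    finally show ?thesis .
  qed
  finally show "Tact Q q n d 0 (Tact Q q n d 0 w) y = (inverse Q - Q) * Tact Q q n d 0 w y + w y" .
qed


lemma lspan_closed: "closed_sub (lspan S)"
  unfolding lspan_def closed_sub_def by auto

lemma lspan_sup: "S \<subseteq> lspan S"
  unfolding lspan_def by auto

lemma lspan_least: "closed_sub W \<Longrightarrow> S \<subseteq> W \<Longrightarrow> lspan S \<subseteq> W"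
  unfolding lspan_def by auto

lemma lspan_mono: "S \<subseteq> T \<Longrightarrow> lspan S \<subseteq> lspan T"
  unfolding lspan_def by auto

lemma cs_zero: "closed_sub W \<Longrightarrow> (\<lambda>y. 0) \<in> W"
  unfolding closed_sub_def by auto
lemma cs_add: "closed_sub W \<Longrightarrow> u \<in> W \<Longrightarrow> v \<in> W \<Longrightarrow> (\<lambda>y. u y + v y) \<in> W"
  unfolding closed_sub_def by auto
lemma cs_scale: "closed_sub W \<Longrightarrow> u \<in> W \<Longrightarrow> (\<lambda>y. c * u y) \<in> W"
  unfolding closed_sub_def by auto
lemma cs_diff: "closed_sub W \<Longrightarrow> u \<in> W \<Longrightarrow> v \<in> W \<Longrightarrow> (\<lambda>y. u y - v y) \<in> W"
proof -
  assume W: "closed_sub W" and u: "u \<in> W" and v: "v \<in> W"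
  have "(\<lambda>y. (-1) * v y) \<in> W" using cs_scale[OF W v] .
  then have "(\<lambda>y. u y + (-1) * v y) \<in> W" using cs_add[OF W u] by blast
  then show ?thesis by simp
qed
lemma cs_self: "closed_sub W \<Longrightarrow> u \<in> W \<Longrightarrow> (\<lambda>y. u y) \<in> W"
  by simp

lemma Kact_1: "Kact Q q n d 1 v = Tact Q q n d 0 v"
  unfolding Kact_def by simp

lemma f_poly_contra:
  assumes Q: "Q \<noteq> 0" and q: "q \<noteq> 0" and f: "f_poly d Q q \<noteq> 0"
    and e: "sgn_eig sg d Q q (if sg then - Q else inverse Q)"
  shows False
proof -
  obtain j where j: "\<bar>j\<bar> < int d"
    and c: "(if sg then - Q else inverse Q) = (if sg then inverse Q else - Q) * q powi (2 * j)"
    using e unfolding sgn_eig_def by blast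
  have fin: "finite {1 - int d..int d - 1}" by simp
  show False
  proof (cases sg)
    case True
    then have x: "q powi (2 * j) = - (Q ^ 2)" using c Q by (auto simp: field_simps power2_eq_square)
    have mem: "- j \<in> {1 - int d..int d - 1}" using j by auto
    have "q powi (2 * (- j)) = inverse (q powi (2 * j))"
      by (simp add: power_int_minus[symmetric])
    then have "inverse (Q ^ 2) + q powi (2 * (- j)) = 0" using x by (simp add: inverse_minus_eq)
    then have "f_poly d Q q = 0" unfolding f_poly_def using fin mem by (metis prod_zero_iff)
    then show False using f by simp
  next
    case False
    then have "- (Q * (Q * q powi (j * 2))) = 1" using c Q
      by (auto simp: field_simps power2_eq_square)
    then have "Q * (Q * q powi (j * 2)) = - 1" by (metis minus_minus)
    then have x: "q powi (2 * j) = - inverse (Q ^ 2)" using Q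
      by (auto simp: field_simps power2_eq_square mult.commute)
    have mem: "j \<in> {1 - int d..int d - 1}" using j by auto
    have "inverse (Q ^ 2) + q powi (2 * j) = 0" using x by simp
    then have "f_poly d Q q = 0" unfolding f_poly_def using fin mem by (metis prod_zero_iff)
    then show False using f by simp
  qed
qed

lemma T0_in_tens_ker:
  assumes Q: "Q \<noteq> 0" and q: "q \<noteq> 0" and f: "f_poly d Q q \<noteq> 0" and d: "0 < d"
    and w: "w \<in> tens n d"
  shows "(\<lambda>y. Tact Q q n d 0 w y - (if sg then inverse Q else - Q) * w y) \<in> tens_ker sg Q q n d"
  unfolding tens_ker_def
proof (rule InterI)
  fix W assume "W \<in> {W. W \<subseteq> tens n d \<and> closed_sub W
      \<and> (\<forall>i\<in>{1..d}. \<forall>w\<in>W. Kact Q q n d i w \<in> W)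
      \<and> (\<forall>i\<in>{1..d}. \<forall>c. (\<exists>v\<in>tens n d. v \<notin> W \<and> (\<lambda>y. Kact Q q n d i v y - c * v y) \<in> W)
             \<longrightarrow> sgn_eig sg d Q q c)}"
  then have W: "closed_sub W" and eig0: "\<forall>i\<in>{1..d}. \<forall>c. (\<exists>v\<in>tens n d. v \<notin> W \<and> (\<lambda>y. Kact Q q n d i v y - c * v y) \<in> W)
             \<longrightarrow> sgn_eig sg d Q q c" by blast+
  have one: "(1::nat) \<in> {1..d}" using d by simp
  have eig: "\<And>c. (\<exists>v\<in>tens n d. v \<notin> W \<and> (\<lambda>y. Kact Q q n d 1 v y - c * v y) \<in> W)
             \<Longrightarrow> sgn_eig sg d Q q c" using bspec[OF eig0 one] by blast
  define c0 where "c0 = (if sg then inverse Q else - Q)"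
  define c where "c = (if sg then - Q else inverse Q)"
  define v where "v = (\<lambda>y. Tact Q q n d 0 w y - c0 * w y)"
  have vt: "v \<in> tens n d" unfolding v_def
    using cs_diff[OF closed_tens Tact_tens[OF d] cs_scale[OF closed_tens w]] by blast
  have "Tact Q q n d 0 v = (\<lambda>y. Tact Q q n d 0 (Tact Q q n d 0 w) y - c0 * Tact Q q n d 0 w y)"
    unfolding v_def Tact_diff Tact_scale by simp
  also have "\<dots> = (\<lambda>y. c * v y)"
    unfolding T0_sq[OF w d Q] v_def c_def c0_def using Q by (auto simp: field_simps)
  finally have Tv: "Tact Q q n d 0 v = (\<lambda>y. c * v y)" .
  have z: "(\<lambda>y. Kact Q q n d 1 v y - c * v y) \<in> W"
    unfolding Kact_1 Tv using cs_zero[OF W] by simp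
  show "(\<lambda>y. Tact Q q n d 0 w y - (if sg then inverse Q else - Q) * w y) \<in> W"
  proof (rule ccontr)
    assume "(\<lambda>y. Tact Q q n d 0 w y - (if sg then inverse Q else - Q) * w y) \<notin> W"
    then have "v \<notin> W" unfolding v_def c0_def .
    then have "sgn_eig sg d Q q c" using eig vt z by blast
    then show False using f_poly_contra[OF Q q f] unfolding c_def by blast
  qed
qed


definition Rgen :: "'a::field \<Rightarrow> 'a \<Rightarrow> 'a \<Rightarrow> nat \<Rightarrow> nat \<Rightarrow> (int list \<Rightarrow> 'a) set" where
  "Rgen c1 Q q n d = {(\<lambda>y. Tact Q q n d i w y - c1 * w y) | i w. 0 < i \<and> i < d \<and> w \<in> tens n d}"

definition chi :: "'a \<Rightarrow> 'a \<Rightarrow> nat \<Rightarrow> 'a" where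
  "chi c0 c1 i = (if i = 0 then c0 else c1)"

lemma sym_Rgen: "sym_rels Q q n d = Rgen (inverse q) Q q n d"
  unfolding sym_rels_def Rgen_def by simp

lemma wedge_Rgen: "wedge_rels Q q n d = Rgen (- q) Q q n d"
  unfolding wedge_rels_def Rgen_def by simp

lemma gen_sub_tens:
  "T0_rels sg Q q n d \<union> Rgen c1 Q q n d \<subseteq> tens n d"
proof
  fix x assume "x \<in> T0_rels sg Q q n d \<union> Rgen c1 Q q n d"
  then obtain i w c where x: "x = (\<lambda>y. Tact Q q n d i w y - c * w y)" and i: "i < d" and w: "w \<in> tens n d"
    unfolding T0_rels_def Rgen_def by blast
  show "x \<in> tens n d" unfolding x
    using cs_diff[OF closed_tens Tact_tens[OF i] cs_scale[OF closed_tens w]] by blast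
qed

lemma C_sub_tens: "lspan (T0_rels sg Q q n d \<union> Rgen c1 Q q n d) \<subseteq> tens n d"
  by (rule lspan_least[OF closed_tens gen_sub_tens])

lemma gen_in:
  assumes C: "C = lspan (T0_rels sg Q q n d \<union> Rgen c1 Q q n d)"
    and c0: "c0 = (if sg then inverse Q else - Q)"
    and w: "w \<in> tens n d" and i: "i < d"
  shows "(\<lambda>y. Tact Q q n d i w y - chi c0 c1 i * w y) \<in> C"
proof -
  have "(\<lambda>y. Tact Q q n d i w y - chi c0 c1 i * w y) \<in> T0_rels sg Q q n d \<union> Rgen c1 Q q n d"
  proof (cases "i = 0")
    case True
    then show ?thesis unfolding T0_rels_def chi_def c0 using w i by auto
  next
    case False
    then show ?thesis unfolding Rgen_def chi_def using w i by auto
  qed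
  then show ?thesis using lspan_sup C by blast
qed

lemma fold_gen:
  assumes C: "C = lspan (T0_rels sg Q q n d \<union> Rgen c1 Q q n d)"
    and c0: "c0 = (if sg then inverse Q else - Q)"
  shows "set l \<subseteq> {..<d} \<Longrightarrow> w \<in> tens n d \<Longrightarrow> fold (Tact Q q n d) l w \<in> tens n d \<and>
      (\<lambda>y. fold (Tact Q q n d) l w y - prod_list (map (chi c0 c1) l) * w y) \<in> C"
proof (induction l arbitrary: w)
  case Nil
  have "closed_sub C" using C lspan_closed by blast
  then show ?case using Nil cs_zero by simp
next
  case (Cons i l)
  have cl: "closed_sub C" using C lspan_closed by blast
  have i: "i < d" using Cons.prems by auto
  define w' where "w' = Tact Q q n d i w"
  have w': "w' \<in> tens n d" unfolding w'_def using Tact_tens[OF i] .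
  from Cons.IH[OF _ w'] Cons.prems have IH: "fold (Tact Q q n d) l w' \<in> tens n d"
    "(\<lambda>y. fold (Tact Q q n d) l w' y - prod_list (map (chi c0 c1) l) * w' y) \<in> C" by auto
  have g: "(\<lambda>y. w' y - chi c0 c1 i * w y) \<in> C" unfolding w'_def using gen_in[OF C c0 Cons.prems(2) i] .
  have "(\<lambda>y. (fold (Tact Q q n d) l w' y - prod_list (map (chi c0 c1) l) * w' y)
      + prod_list (map (chi c0 c1) l) * (w' y - chi c0 c1 i * w y)) \<in> C"
    using cs_add[OF cl IH(2) cs_scale[OF cl g]] by simp
  then have "(\<lambda>y. fold (Tact Q q n d) l w' y - prod_list (map (chi c0 c1) (i # l)) * w y) \<in> C"
    by (simp add: algebra_simps)
  then show ?case using IH(1) unfolding w'_def by simp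
qed

lemma prod_list_const: "(\<forall>x\<in>set xs. f x = c) \<Longrightarrow> prod_list (map f xs) = c ^ length xs"
  by (induction xs) auto

lemma chiK: fixes c0 c1 :: "'a::field" shows "prod_list (map (chi c0 c1) (rev [1..<i] @ 0 # [1..<i])) = c0 * c1 ^ (2 * (i - 1))"
proof -
  have a: "prod_list (map (chi c0 c1) [1..<i]) = c1 ^ (i - 1)"
    using prod_list_const[of "[1..<i]" "chi c0 c1" c1] by (simp add: chi_def)
  have b: "prod_list (map (chi c0 c1) (rev [1..<i])) = c1 ^ (i - 1)"
    using prod_list_const[of "rev [1..<i]" "chi c0 c1" c1] by (simp add: chi_def)
  have c: "c1 ^ (2 * (i - 1)) = c1 ^ (i - 1) * c1 ^ (i - 1)" by (simp add: mult_2 power_add)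
  show ?thesis using a b unfolding c by (simp add: chi_def algebra_simps)
qed

lemma ker_le:
  assumes C: "C = lspan (T0_rels sg Q q n d \<union> Rgen c1 Q q n d)"
    and c0: "c0 = (if sg then inverse Q else - Q)"
    and eg: "\<And>i. i \<in> {1..d} \<Longrightarrow> sgn_eig sg d Q q (c0 * c1 ^ (2 * (i - 1)))"
  shows "tens_ker sg Q q n d \<subseteq> C"
  unfolding tens_ker_def
proof (rule Inter_lower, safe)
  have cl: "closed_sub C" using C lspan_closed by blast
  show Ct: "\<And>x. x \<in> C \<Longrightarrow> x \<in> tens n d" using C C_sub_tens by blast
  show "closed_sub C" by (rule cl)
  have Kl: "\<And>i. i \<in> {1..d} \<Longrightarrow> set (rev [1..<i] @ 0 # [1..<i]) \<subseteq> {..<d}" by auto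
  have K: "\<And>i v. i \<in> {1..d} \<Longrightarrow> v \<in> tens n d \<Longrightarrow>
      (\<lambda>y. Kact Q q n d i v y - (c0 * c1 ^ (2 * (i - 1))) * v y) \<in> C"
    unfolding Kact_def chiK[symmetric] using fold_gen[OF C c0 Kl] by blast
  show "\<And>i w. i \<in> {1..d} \<Longrightarrow> w \<in> C \<Longrightarrow> Kact Q q n d i w \<in> C"
  proof -
    fix i w assume i: "i \<in> {1..d}" and w: "w \<in> C"
    have "(\<lambda>y. (Kact Q q n d i w y - (c0 * c1 ^ (2 * (i - 1))) * w y) + (c0 * c1 ^ (2 * (i - 1))) * w y) \<in> C"
      using cs_add[OF cl K[OF i Ct[OF w]] cs_scale[OF cl w]] .
    then show "Kact Q q n d i w \<in> C" by simp
  qed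
  show "\<And>i c v. i \<in> {1..d} \<Longrightarrow> v \<in> tens n d \<Longrightarrow> v \<notin> C \<Longrightarrow>
      (\<lambda>y. Kact Q q n d i v y - c * v y) \<in> C \<Longrightarrow> sgn_eig sg d Q q c"
  proof -
    fix i c v assume i: "i \<in> {1..d}" and v: "v \<in> tens n d" and vC: "v \<notin> C"
      and e: "(\<lambda>y. Kact Q q n d i v y - c * v y) \<in> C"
    define k where "k = c0 * c1 ^ (2 * (i - 1))"
    have "c = k"
    proof (rule ccontr)
      assume ne: "c \<noteq> k"
      have "(\<lambda>y. (Kact Q q n d i v y - c * v y) - (Kact Q q n d i v y - k * v y)) \<in> C"
        using cs_diff[OF cl e K[OF i v]] unfolding k_def .
      then have "(\<lambda>y. inverse (k - c) * ((Kact Q q n d i v y - c * v y) - (Kact Q q n d i v y - k * v y))) \<in> C"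
        using cs_scale[OF cl] by blast
      moreover have "(\<lambda>y. inverse (k - c) * ((Kact Q q n d i v y - c * v y) - (Kact Q q n d i v y - k * v y))) = v"
        using ne by (auto simp: field_simps)
      ultimately show False using vC by simp
    qed
    then show "sgn_eig sg d Q q c" using eg[OF i] unfolding k_def by simp
  qed
qed


lemma pushout_gen:
  assumes AV: "A \<subseteq> V" and BV: "B \<subseteq> V" and AC: "A \<subseteq> C" and BC: "B \<subseteq> C"
    and CS: "C \<subseteq> {(\<lambda>y. a y + b y) | a b. a \<in> A \<and> b \<in> B}"
  shows "quot_pushout TYPE('z::ab_group_add) V A B C"
  unfolding quot_pushout_def
proof (intro conjI AC BC allI impI)
  fix sZ :: "'a \<Rightarrow> 'z \<Rightarrow> 'z" and u v :: "(int list \<Rightarrow> 'a) \<Rightarrow> 'z"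
  assume h: "lin_on V sZ u \<and> vanish A u \<and> lin_on V sZ v \<and> vanish B v \<and> (\<forall>x\<in>V. u x = v x)"
  have vC: "vanish C u" unfolding vanish_def
  proof
    fix c assume "c \<in> C"
    then obtain a b where c: "c = (\<lambda>y. a y + b y)" and a: "a \<in> A" and b: "b \<in> B" using CS by blast
    have "u c = u a + u b" using h a b AV BV unfolding c lin_on_def by blast
    also have "u a = 0" using h a unfolding vanish_def by blast
    also have "u b = v b" using h b BV by blast
    also have "v b = 0" using h b unfolding vanish_def by blast
    finally show "u c = 0" by simp
  qed
  show "\<exists>h. lin_on V sZ h \<and> vanish C h \<and> (\<forall>x\<in>V. h x = u x) \<and> (\<forall>x\<in>V. h x = v x)
              \<and> (\<forall>h'. lin_on V sZ h' \<and> vanish C h' \<and> (\<forall>x\<in>V. h' x = u x) \<and> (\<forall>x\<in>V. h' x = v x)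
                    \<longrightarrow> (\<forall>x\<in>V. h' x = h x))"
    using h vC by (intro exI[of _ u]) auto
qed

lemma mem: "a \<in> A \<Longrightarrow> b \<in> B \<Longrightarrow> (\<lambda>y. a y + b y) \<in> {(\<lambda>y. a y + b y) | a b. a \<in> A \<and> b \<in> B}"
  by blast

lemma sum_closed:
  assumes A: "closed_sub A" and B: "closed_sub B"
  shows "closed_sub {(\<lambda>y. a y + b y) | a b. a \<in> A \<and> b \<in> B}"
  unfolding closed_sub_def
proof (intro conjI ballI allI)
  show "(\<lambda>y. 0) \<in> {(\<lambda>y. a y + b y) | a b. a \<in> A \<and> b \<in> B}"
    using mem[OF cs_zero[OF A] cs_zero[OF B]] by simp
next
  fix u v assume "u \<in> {(\<lambda>y. a y + b y) | a b. a \<in> A \<and> b \<in> B}" "v \<in> {(\<lambda>y. a y + b y) | a b. a \<in> A \<and> b \<in> B}"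
  then obtain a b a' b' where u: "u = (\<lambda>y. a y + b y)" "a \<in> A" "b \<in> B"
    and v: "v = (\<lambda>y. a' y + b' y)" "a' \<in> A" "b' \<in> B" by blast
  have "(\<lambda>y. u y + v y) = (\<lambda>y. (\<lambda>y. a y + a' y) y + (\<lambda>y. b y + b' y) y)" unfolding u v by (auto simp: algebra_simps)
  then show "(\<lambda>y. u y + v y) \<in> {(\<lambda>y. a y + b y) | a b. a \<in> A \<and> b \<in> B}"
    using mem[OF cs_add[OF A u(2) v(2)] cs_add[OF B u(3) v(3)]] by simp
next
  fix c u assume "u \<in> {(\<lambda>y. a y + b y) | a b. a \<in> A \<and> b \<in> B}"
  then obtain a b where u: "u = (\<lambda>y. a y + b y)" "a \<in> A" "b \<in> B" by blast
  have "(\<lambda>y. c * u y) = (\<lambda>y. (\<lambda>y. c * a y) y + (\<lambda>y. c * b y) y)" unfolding u by (auto simp: algebra_simps)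
  then show "(\<lambda>y. c * u y) \<in> {(\<lambda>y. a y + b y) | a b. a \<in> A \<and> b \<in> B}"
    using mem[OF cs_scale[OF A u(2)] cs_scale[OF B u(3)]] by simp
qed

lemma tens_ker_closed: "closed_sub (tens_ker sg Q q n d)"
  unfolding tens_ker_def closed_sub_def by auto

lemma main_gen:
  fixes Q q c1 :: "'a::field"
  assumes Q: "Q \<noteq> 0" and q: "q \<noteq> 0" and f: "f_poly d Q q \<noteq> 0"
    and eg: "\<And>i. i \<in> {1..d} \<Longrightarrow> sgn_eig sg d Q q ((if sg then inverse Q else - Q) * c1 ^ (2 * (i - 1)))"
  shows "quot_pushout TYPE('z::ab_group_add) (tens n d) (lspan (Rgen c1 Q q n d)) (tens_ker sg Q q n d)
        (lspan (T0_rels sg Q q n d \<union> Rgen c1 Q q n d))"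
proof (rule pushout_gen)
  let ?C = "lspan (T0_rels sg Q q n d \<union> Rgen c1 Q q n d)"
  let ?A = "lspan (Rgen c1 Q q n d)"
  let ?B = "tens_ker sg Q q n d"
  show AC: "?A \<subseteq> ?C" by (rule lspan_mono) blast
  show BC: "?B \<subseteq> ?C" by (rule ker_le[OF refl refl eg])
  show "?A \<subseteq> tens n d" using AC C_sub_tens by blast
  show "?B \<subseteq> tens n d" using BC C_sub_tens by blast
  have Acl: "closed_sub ?A" by (rule lspan_closed)
  have Bcl: "closed_sub ?B" by (rule tens_ker_closed)
  show "?C \<subseteq> {(\<lambda>y. a y + b y) | a b. a \<in> ?A \<and> b \<in> ?B}"
  proof (rule lspan_least[OF sum_closed[OF Acl Bcl]], safe)
    fix x assume "x \<in> T0_rels sg Q q n d"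
    then obtain w where x: "x = (\<lambda>y. Tact Q q n d 0 w y - (if sg then inverse Q else - Q) * w y)"
      and d: "0 < d" and w: "w \<in> tens n d" unfolding T0_rels_def by blast
    have "x \<in> ?B" unfolding x by (rule T0_in_tens_ker[OF Q q f d w])
    then show "\<exists>a b. x = (\<lambda>y. a y + b y) \<and> a \<in> ?A \<and> b \<in> ?B" using cs_zero[OF Acl]
      by (intro exI[of _ "\<lambda>y. 0"] exI[of _ x]) simp
  next
    fix x assume "x \<in> Rgen c1 Q q n d"
    then have "x \<in> ?A" using lspan_sup by blast
    then show "\<exists>a b. x = (\<lambda>y. a y + b y) \<and> a \<in> ?A \<and> b \<in> ?B" using cs_zero[OF Bcl]
      by (intro exI[of _ x] exI[of _ "\<lambda>y. 0"]) simp
  qed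
qed

lemma eg_sym:
  fixes Q q :: "'a::field"
  assumes q: "q \<noteq> 0" and i: "i \<in> {1..d}"
  shows "sgn_eig sg d Q q ((if sg then inverse Q else - Q) * inverse q ^ (2 * (i - 1)))"
  unfolding sgn_eig_def
proof (intro exI conjI)
  let ?j = "- (int i - 1)"
  show "\<bar>?j\<bar> < int d" using i by auto
  have e: "2 * ?j = - int (2 * (i - 1))" using i by auto
  have "q powi (2 * ?j) = inverse q ^ (2 * (i - 1))"
    unfolding e power_int_minus power_int_of_nat by (simp add: power_inverse)
  then show "(if sg then inverse Q else - Q) * inverse q ^ (2 * (i - 1)) =
      (if sg then inverse Q else - Q) * q powi (2 * ?j)" by simp
qed

lemma eg_wedge:
  fixes Q q :: "'a::field"
  assumes q: "q \<noteq> 0" and i: "i \<in> {1..d}"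
  shows "sgn_eig sg d Q q ((if sg then inverse Q else - Q) * (- q) ^ (2 * (i - 1)))"
  unfolding sgn_eig_def
proof (intro exI conjI)
  let ?j = "int i - 1"
  show "\<bar>?j\<bar> < int d" using i by auto
  have e: "2 * ?j = int (2 * (i - 1))" using i by auto
  have "q powi (2 * ?j) = (- q) ^ (2 * (i - 1))"
    unfolding e power_int_of_nat by (simp add: power_mult)
  then show "(if sg then inverse Q else - Q) * (- q) ^ (2 * (i - 1)) =
      (if sg then inverse Q else - Q) * q powi (2 * ?j)" by simp
qed

theorem proposition7p8:
  fixes Q q :: "'a::field" and d :: nat
  assumes "Q \<noteq> 0" and "q \<noteq> 0" and "f_poly d Q q \<noteq> 0"
  shows "\<forall>sg::bool. \<forall>n::nat.
     quot_pushout TYPE('z::ab_group_add) (tens n d) (sym_ker Q q n d) (tens_ker sg Q q n d)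
        (symS_ker sg Q q n d)
   \<and> quot_pushout TYPE('z) (tens n d) (wedge_ker Q q n d) (tens_ker sg Q q n d)
        (wedgeS_ker sg Q q n d)"
proof (intro allI conjI)
  fix sg n
  show "quot_pushout TYPE('z::ab_group_add) (tens n d) (sym_ker Q q n d) (tens_ker sg Q q n d)
        (symS_ker sg Q q n d)"
    unfolding sym_ker_def symS_ker_def sym_Rgen
    using main_gen[OF assms eg_sym[OF assms(2)]] by blast
  show "quot_pushout TYPE('z::ab_group_add) (tens n d) (wedge_ker Q q n d) (tens_ker sg Q q n d)
        (wedgeS_ker sg Q q n d)"
    unfolding wedge_ker_def wedgeS_ker_def wedge_Rgen
    using main_gen[OF assms eg_wedge[OF assms(2)]] by blast
qed

end
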